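(* Let $A\in\mathbb{R}^{n\times n}$, $B\in\mathbb{R}^{n\times p}$ with $(A,B)$ controllable, let $P$ be a positive definite matrix such that for some $\epsilon>0$, $(x-y)^TP\{A(x-y)-P^{-1}BB^T(x-y)\}\le-\epsilon(x-y)^T(x-y)$ for all $x,y$. Let $L=(l_{ij})\in\mathbb{R}^{m\times m}$ be irreducible with $\mathrm{Rank}(L)=m-1$, $l_{ij}\ge0$ for $i\ne j$, $\sum_jl_{ij}=0$, let $\varepsilon>0$, and let $s(t)$ satisfy $\dot s(t)=As(t)$. Consider $$\frac{dx_1(t)}{dt}=Ax_1(t)+c\sum_{j=1}^ml_{1j}P^{-1}BB^Tx_j(t)-c\varepsilon(x_1(t)-s(t)),$$ $$\frac{dx_i(t)}{dt}=Ax_i(t)+c\sum_{j=1}^ml_{ij}P^{-1}BB^Tx_j(t),\qquad i=2,\dots,m.$$ Then for sufficiently large constant $c$ the system reaches consensus to the trajectory $s(t)$, i.e. $x_i(t)-s(t)\to0$ for all $i$. *)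

theory Defs
  imports "HOL-Analysis.Analysis"
begin

primrec matpow :: "real^'n^'n \<Rightarrow> nat \<Rightarrow> real^'n^'n" where
  "matpow A 0 = mat 1"
| "matpow A (Suc k) = A ** matpow A k"

text \<open>Kalman controllability: the controllability matrix [B, AB, ..., A^(n-1) B]
  has rank n, i.e. its columns span a space of dimension n.\<close>
definition controllable :: "real^'n^'n \<Rightarrow> real^'p^'n \<Rightarrow> bool" where
  "controllable A B \<longleftrightarrow>
     dim (span (\<Union>k<CARD('n). columns (matpow A k ** B))) = CARD('n)"

definition pos_def_matrix :: "real^'n^'n \<Rightarrow> bool" where
  "pos_def_matrix P \<longleftrightarrow> transpose P = P \<and> (\<forall>x. x \<noteq> 0 \<longrightarrow> x \<bullet> (P *v x) > 0)"

text \<open>Reducible matrix: the index set splits into a nonempty proper subset I and its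
  complement J with L_ij = 0 for all i in I, j in J (equivalently, L is permutation-similar
  to a block triangular matrix).\<close>
definition reducible_matrix :: "real^'m^'m \<Rightarrow> bool" where
  "reducible_matrix L \<longleftrightarrow>
     (\<exists>I. I \<noteq> {} \<and> I \<noteq> UNIV \<and> (\<forall>i\<in>I. \<forall>j. j \<notin> I \<longrightarrow> L $ i $ j = 0))"

definition irreducible_matrix :: "real^'m^'m \<Rightarrow> bool" where
  "irreducible_matrix L \<longleftrightarrow> \<not> reducible_matrix L"

end

theory Submission
  imports Defs
begin


lemma exists_left_null:
  fixes L :: "real^'m^'m"
  assumes Lrow: "\<forall>i. (\<Sum>j\<in>UNIV. L $ i $ j) = 0"
  shows "\<exists>w. w \<noteq> 0 \<and> transpose L *v w = 0"
proof (rule ccontr)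
  assume "\<not> ?thesis"
  then have "\<forall>x. transpose L *v x = 0 \<longrightarrow> x = 0" by blast
  then obtain C where "C ** transpose L = mat 1" using matrix_left_invertible_ker by blast
  then obtain D where D: "L ** D = mat 1" using left_invertible_transpose by blast
  then have D2: "D ** L = mat 1" using matrix_left_right_inverse by blast
  have "L *v (\<chi> i. (1::real)) = 0"
    using Lrow by (simp add: matrix_vector_mult_def vec_eq_iff)
  then have "D *v (L *v (\<chi> i. (1::real))) = 0" by simp
  then have "(\<chi> i. (1::real)) = (0::real^'m)" by (simp add: matrix_vector_mul_assoc D2)
  then show False by (simp add: vec_eq_iff)
qed

lemma sum_minus_if:
  fixes f :: "'a::finite \<Rightarrow> real"
  shows "(\<Sum>i\<in>UNIV-{j}. f i) = (\<Sum>i\<in>UNIV. if i = j then 0 else f i)"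
proof -
  have "(\<Sum>i\<in>UNIV. if i = j then 0 else f i) = (if j = j then 0 else f j) + (\<Sum>i\<in>UNIV-{j}. if i = j then 0 else f i)"
    by (rule sum.remove) auto
  also have "(\<Sum>i\<in>UNIV-{j}. if i = j then 0 else f i) = (\<Sum>i\<in>UNIV-{j}. f i)" by (rule sum.cong) auto
  also have "(if j = j then 0 else f j) + (\<Sum>i\<in>UNIV-{j}. f i) = (\<Sum>i\<in>UNIV-{j}. f i)" by simp
  finally show ?thesis by simp
qed

lemma abs_null:
  fixes L :: "real^'m^'m" and w :: "real^'m"
  assumes Loff: "\<forall>i j. i \<noteq> j \<longrightarrow> L $ i $ j \<ge> 0"
    and Lrow: "\<forall>i. (\<Sum>j\<in>UNIV. L $ i $ j) = 0"
    and w: "\<forall>j. (\<Sum>i\<in>UNIV. w$i * L$i$j) = 0"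
  shows "\<forall>j. (\<Sum>i\<in>UNIV. \<bar>w$i\<bar> * L$i$j) = 0"
proof -
  define d where "d i = (\<Sum>j\<in>UNIV-{i}. L$i$j)" for i
  have Ldiag: "L$i$i = - d i" for i
  proof -
    have "(\<Sum>j\<in>UNIV. L $ i $ j) = L$i$i + d i"
      unfolding d_def by (simp add: sum.remove[of UNIV i])
    then show ?thesis using Lrow by simp
  qed
  have ge: "(\<Sum>i\<in>UNIV-{j}. \<bar>w$i\<bar> * L$i$j) \<ge> \<bar>w$j\<bar> * d j" for j
  proof -
    have "(\<Sum>i\<in>UNIV. w$i * L$i$j) = w$j * L$j$j + (\<Sum>i\<in>UNIV-{j}. w$i * L$i$j)"
      by (simp add: sum.remove[of UNIV j])
    then have e: "(\<Sum>i\<in>UNIV-{j}. w$i * L$i$j) = w$j * d j" using w Ldiag by simp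
    have dpos: "d j \<ge> 0" unfolding d_def using Loff by (intro sum_nonneg) (metis DiffE singletonI)
    have "\<bar>w$j\<bar> * d j = \<bar>\<Sum>i\<in>UNIV-{j}. w$i * L$i$j\<bar>" using e dpos by (simp add: abs_mult)
    also have "\<dots> \<le> (\<Sum>i\<in>UNIV-{j}. \<bar>w$i * L$i$j\<bar>)" by (rule sum_abs)
    also have "\<dots> = (\<Sum>i\<in>UNIV-{j}. \<bar>w$i\<bar> * L$i$j)"
      using Loff by (intro sum.cong) (auto simp: abs_mult)
    finally show ?thesis .
  qed
  have tot: "(\<Sum>j\<in>UNIV. \<Sum>i\<in>UNIV-{j}. \<bar>w$i\<bar> * L$i$j) = (\<Sum>j\<in>UNIV. \<bar>w$j\<bar> * d j)"
  proof -
    have "(\<Sum>j\<in>UNIV. \<Sum>i\<in>UNIV-{j}. \<bar>w$i\<bar> * L$i$j) = (\<Sum>j\<in>UNIV. \<Sum>i\<in>UNIV. if i = j then 0 else \<bar>w$i\<bar> * L$i$j)"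
      by (rule sum.cong[OF refl], rule sum_minus_if)
    also have "\<dots> = (\<Sum>i\<in>UNIV. \<Sum>j\<in>UNIV. if i = j then 0 else \<bar>w$i\<bar> * L$i$j)"
      by (rule sum.swap)
    also have "\<dots> = (\<Sum>i\<in>UNIV. \<bar>w$i\<bar> * d i)"
      unfolding d_def
      apply (intro sum.cong refl) apply (simp add: sum_minus_if sum_distrib_left if_distrib cong: if_cong)
      apply (intro sum.cong refl) apply auto done
    finally show ?thesis .
  qed
  have eq: "(\<Sum>i\<in>UNIV-{j}. \<bar>w$i\<bar> * L$i$j) = \<bar>w$j\<bar> * d j" for j
  proof (rule ccontr)
    assume "\<not> ?thesis"
    then have "(\<Sum>i\<in>UNIV-{j}. \<bar>w$i\<bar> * L$i$j) > \<bar>w$j\<bar> * d j" using ge[of j] by simp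
    then have "(\<Sum>j\<in>UNIV. \<bar>w$j\<bar> * d j) < (\<Sum>j\<in>UNIV. \<Sum>i\<in>UNIV-{j}. \<bar>w$i\<bar> * L$i$j)"
      using ge by (intro sum_strict_mono_ex1) auto
    then show False using tot by simp
  qed
  show ?thesis
  proof
    fix j
    have "(\<Sum>i\<in>UNIV. \<bar>w$i\<bar> * L$i$j) = \<bar>w$j\<bar> * L$j$j + (\<Sum>i\<in>UNIV-{j}. \<bar>w$i\<bar> * L$i$j)"
      by (simp add: sum.remove[of UNIV j])
    then show "(\<Sum>i\<in>UNIV. \<bar>w$i\<bar> * L$i$j) = 0" using eq[of j] Ldiag[of j] by simp
  qed
qed

lemma pos_of_nonneg:
  fixes L :: "real^'m^'m" and w :: "real^'m"
  assumes Loff: "\<forall>i j. i \<noteq> j \<longrightarrow> L $ i $ j \<ge> 0"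
    and Lirr: "irreducible_matrix L"
    and w: "\<forall>j. (\<Sum>i\<in>UNIV. w$i * L$i$j) = 0"
    and nn: "\<forall>i. w$i \<ge> 0" and nz: "w \<noteq> 0"
  shows "\<forall>i. w$i > 0"
proof -
  define I where "I = {i. w$i > 0}"
  have "I \<noteq> {}"
  proof
    assume "I = {}"
    then have "\<forall>i. w$i = 0" using nn unfolding I_def by (metis empty_Collect_eq less_eq_real_def)
    then show False using nz by (simp add: vec_eq_iff)
  qed
  moreover have "\<forall>i\<in>I. \<forall>j. j \<notin> I \<longrightarrow> L $ i $ j = 0"
  proof (intro ballI allI impI)
    fix i j assume iI: "i \<in> I" and jI: "j \<notin> I"
    then have wj: "w$j = 0" using nn unfolding I_def by (metis less_eq_real_def mem_Collect_eq)
    have ij: "i \<noteq> j" using iI jI by auto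
    have "(\<Sum>k\<in>UNIV. w$k * L$k$j) = w$j * L$j$j + (\<Sum>k\<in>UNIV-{j}. w$k * L$k$j)"
      by (simp add: sum.remove[of UNIV j])
    then have s0: "(\<Sum>k\<in>UNIV-{j}. w$k * L$k$j) = 0" using w wj by simp
    have tn: "\<forall>k\<in>UNIV-{j}. 0 \<le> w$k * L$k$j"
      using nn Loff by (metis DiffE mult_nonneg_nonneg singletonI)
    have "w$i * L$i$j = 0"
      using sum_nonneg_eq_0_iff[of "UNIV-{j}" "\<lambda>k. w$k * L$k$j"] s0 tn ij by auto
    moreover have "w$i > 0" using iI unfolding I_def by simp
    ultimately show "L$i$j = 0" by simp
  qed
  ultimately have "I = UNIV" using Lirr unfolding irreducible_matrix_def reducible_matrix_def by blast
  then show ?thesis unfolding I_def by auto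
qed

lemma xi_exists:
  fixes L :: "real^'m^'m"
  assumes Loff: "\<forall>i j. i \<noteq> j \<longrightarrow> L $ i $ j \<ge> 0"
    and Lrow: "\<forall>i. (\<Sum>j\<in>UNIV. L $ i $ j) = 0"
    and Lirr: "irreducible_matrix L"
  shows "\<exists>\<xi>::real^'m. (\<forall>i. \<xi>$i > 0) \<and> (\<forall>j. (\<Sum>i\<in>UNIV. \<xi>$i * L$i$j) = 0)"
proof -
  obtain w where wnz: "w \<noteq> 0" and wk: "transpose L *v w = 0" using exists_left_null[OF Lrow] by blast
  have w: "\<forall>j. (\<Sum>i\<in>UNIV. w$i * L$i$j) = 0"
  proof
    fix j
    have "(transpose L *v w)$j = 0" using wk by simp
    then show "(\<Sum>i\<in>UNIV. w$i * L$i$j) = 0"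
      by (simp add: matrix_vector_mult_def transpose_def mult.commute)
  qed
  have wa: "\<forall>j. (\<Sum>i\<in>UNIV. \<bar>w$i\<bar> * L$i$j) = 0" using abs_null[OF Loff Lrow w] .
  define v where "v = (\<chi> i. (\<bar>w$i\<bar> - w$i) / 2)"
  have vk: "\<forall>j. (\<Sum>i\<in>UNIV. v$i * L$i$j) = 0"
  proof
    fix j
    have "(\<Sum>i\<in>UNIV. v$i * L$i$j) = ((\<Sum>i\<in>UNIV. \<bar>w$i\<bar> * L$i$j) - (\<Sum>i\<in>UNIV. w$i * L$i$j)) / 2"
      unfolding v_def by (simp add: sum_subtractf flip: sum_divide_distrib add: left_diff_distrib)
    then show "(\<Sum>i\<in>UNIV. v$i * L$i$j) = 0" using w wa by simp
  qed
  have vnn: "\<forall>i. v$i \<ge> 0" unfolding v_def by (simp add: abs_ge_self)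
  show ?thesis
  proof (cases "v = 0")
    case True
    then have "\<forall>i. \<bar>w$i\<bar> = w$i" unfolding v_def by (simp add: vec_eq_iff)
    then have "\<forall>i. w$i \<ge> 0" by (metis abs_ge_zero)
    then show ?thesis using pos_of_nonneg[OF Loff Lirr w _ wnz] w by blast
  next
    case False
    then show ?thesis using pos_of_nonneg[OF Loff Lirr vk vnn] vk by blast
  qed
qed



lemma quad_identity:
  fixes L :: "real^'m^'m" and \<xi> y :: "real^'m"
  assumes Lrow: "\<forall>i. (\<Sum>j\<in>UNIV. L $ i $ j) = 0"
    and xk: "\<forall>j. (\<Sum>i\<in>UNIV. \<xi>$i * L$i$j) = 0"
  shows "(\<Sum>i\<in>UNIV. \<Sum>j\<in>UNIV. \<xi>$i * L$i$j * y$i * y$j)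
       = - (1/2) * (\<Sum>i\<in>UNIV. \<Sum>j\<in>UNIV. \<xi>$i * L$i$j * (y$i - y$j)^2)"
proof -
  have e1: "(\<Sum>i\<in>UNIV. \<Sum>j\<in>UNIV. \<xi>$i * L$i$j * (y$i)^2) = 0"
  proof -
    have "(\<Sum>i\<in>UNIV. \<Sum>j\<in>UNIV. \<xi>$i * L$i$j * (y$i)^2) = (\<Sum>i\<in>UNIV. \<xi>$i * (y$i)^2 * (\<Sum>j\<in>UNIV. L$i$j))"
      by (intro sum.cong refl, subst sum_distrib_left) (simp add: mult_ac)
    then show ?thesis using Lrow by simp
  qed
  have e2: "(\<Sum>i\<in>UNIV. \<Sum>j\<in>UNIV. \<xi>$i * L$i$j * (y$j)^2) = 0"
  proof -
    have "(\<Sum>i\<in>UNIV. \<Sum>j\<in>UNIV. \<xi>$i * L$i$j * (y$j)^2) = (\<Sum>j\<in>UNIV. \<Sum>i\<in>UNIV. \<xi>$i * L$i$j * (y$j)^2)"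
      by (rule sum.swap)
    also have "\<dots> = (\<Sum>j\<in>UNIV. (y$j)^2 * (\<Sum>i\<in>UNIV. \<xi>$i * L$i$j))"
      by (intro sum.cong refl, subst sum_distrib_left) (simp add: mult_ac)
    finally show ?thesis using xk by simp
  qed
  have "(\<Sum>i\<in>UNIV. \<Sum>j\<in>UNIV. \<xi>$i * L$i$j * (y$i - y$j)^2)
      = (\<Sum>i\<in>UNIV. \<Sum>j\<in>UNIV. \<xi>$i * L$i$j * (y$i)^2) + (\<Sum>i\<in>UNIV. \<Sum>j\<in>UNIV. \<xi>$i * L$i$j * (y$j)^2)
        - 2 * (\<Sum>i\<in>UNIV. \<Sum>j\<in>UNIV. \<xi>$i * L$i$j * y$i * y$j)"
    by (simp add: sum_distrib_left sum_subtractf sum.distrib power2_diff algebra_simps)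
  then show ?thesis using e1 e2 by simp
qed

lemma quad_neg:
  fixes L :: "real^'m^'m" and \<xi> y :: "real^'m"
  assumes Loff: "\<forall>i j. i \<noteq> j \<longrightarrow> L $ i $ j \<ge> 0"
    and Lrow: "\<forall>i. (\<Sum>j\<in>UNIV. L $ i $ j) = 0"
    and Lirr: "irreducible_matrix L"
    and xpos: "\<forall>i. \<xi>$i > 0"
    and xk: "\<forall>j. (\<Sum>i\<in>UNIV. \<xi>$i * L$i$j) = 0"
    and gpos: "\<gamma> > 0"
    and ynz: "y \<noteq> 0"
  shows "(\<Sum>i\<in>UNIV. \<Sum>j\<in>UNIV. \<xi>$i * L$i$j * y$i * y$j) - \<gamma> * \<xi>$i1 * (y$i1)^2 < 0"
proof (rule ccontr)
  assume "\<not> ?thesis"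
  then have ge: "0 \<le> - (1/2) * (\<Sum>i\<in>UNIV. \<Sum>j\<in>UNIV. \<xi>$i * L$i$j * (y$i - y$j)^2) - \<gamma> * \<xi>$i1 * (y$i1)^2"
    using quad_identity[OF Lrow xk, of y] by simp
  have tnn: "0 \<le> \<xi>$i * L$i$j * (y$i - y$j)^2" for i j
  proof (cases "i = j")
    case False then show ?thesis using Loff xpos by (simp add: less_imp_le)
  qed simp
  have Snn: "0 \<le> (\<Sum>i\<in>UNIV. \<Sum>j\<in>UNIV. \<xi>$i * L$i$j * (y$i - y$j)^2)"
    by (intro sum_nonneg tnn)
  have pnn: "0 \<le> \<gamma> * \<xi>$i1 * (y$i1)^2" using gpos xpos by (simp add: less_imp_le)
  have S0: "(\<Sum>i\<in>UNIV. \<Sum>j\<in>UNIV. \<xi>$i * L$i$j * (y$i - y$j)^2) = 0" using ge Snn pnn by linarith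
  have "\<gamma> * \<xi>$i1 * (y$i1)^2 = 0" using ge Snn pnn by linarith
  then have y1: "y$i1 = 0" using gpos xpos by (metis mult_eq_0_iff power_eq_0_iff order_less_irrefl)
  have inner0: "(\<Sum>j\<in>UNIV. \<xi>$i * L$i$j * (y$i - y$j)^2) = 0" for i
  proof -
    have "\<forall>i\<in>UNIV. (\<Sum>j\<in>UNIV. \<xi>$i * L$i$j * (y$i - y$j)^2) = 0"
      using S0 by (subst sum_nonneg_eq_0_iff[symmetric]) (auto intro!: sum_nonneg tnn)
    then show ?thesis by simp
  qed
  have t0: "\<xi>$i * L$i$j * (y$i - y$j)^2 = 0" for i j
    using inner0[of i] sum_nonneg_eq_0_iff[of UNIV "\<lambda>j. \<xi>$i * L$i$j * (y$i - y$j)^2"] tnn by auto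
  define I where "I = {i. y$i \<noteq> 0}"
  have "\<forall>i\<in>I. \<forall>j. j \<notin> I \<longrightarrow> L $ i $ j = 0"
  proof (intro ballI allI impI)
    fix i j assume "i \<in> I" "j \<notin> I"
    then have "y$i \<noteq> 0" "y$j = 0" unfolding I_def by auto
    then show "L$i$j = 0" using t0[of i j] xpos by (metis diff_zero mult_eq_0_iff power_eq_0_iff order_less_irrefl)
  qed
  moreover have "I \<noteq> UNIV" using y1 unfolding I_def by auto
  ultimately have "I = {}" using Lirr unfolding irreducible_matrix_def reducible_matrix_def by blast
  then have "y = 0" unfolding I_def by (simp add: vec_eq_iff)
  then show False using ynz by simp
qed

lemma quad_neg_unif:
  fixes Q :: "real^'k \<Rightarrow> real"
  assumes cont: "continuous_on UNIV Q"
    and hom: "\<And>y t. Q (t *\<^sub>R y) = t^2 * Q y"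
    and neg: "\<And>y. y \<noteq> 0 \<Longrightarrow> Q y < 0"
  shows "\<exists>\<sigma>>0. \<forall>y. Q y \<le> - \<sigma> * (y \<bullet> y)"
proof -
  obtain k :: 'k where True by simp
  have ne: "sphere (0::real^'k) 1 \<noteq> {}"
    using norm_axis_1[of k] by (metis dist_0_norm mem_sphere empty_iff)
  obtain x0 where x0: "x0 \<in> sphere 0 1" and mx: "\<forall>y\<in>sphere 0 1. Q y \<le> Q x0"
    using continuous_attains_sup[OF compact_sphere ne continuous_on_subset[OF cont]] by blast
  have x0nz: "x0 \<noteq> 0" using x0 by auto
  define \<sigma> where "\<sigma> = - Q x0"
  have sp: "\<sigma> > 0" using neg[OF x0nz] unfolding \<sigma>_def by simp
  have "Q y \<le> - \<sigma> * (y \<bullet> y)" for y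
  proof (cases "y = 0")
    case True
    have "Q 0 = 0" using hom[of 0 0] by simp
    then show ?thesis using True by simp
  next
    case False
    define u where "u = (1 / norm y) *\<^sub>R y"
    have u: "u \<in> sphere 0 1" unfolding u_def using False by simp
    have yu: "y = norm y *\<^sub>R u" unfolding u_def using False by simp
    have "Q y = (norm y)^2 * Q u" by (subst yu, rule hom)
    also have "\<dots> \<le> (norm y)^2 * Q x0" using mx u by (simp add: mult_left_mono)
    also have "\<dots> = - \<sigma> * (y \<bullet> y)" unfolding \<sigma>_def by (simp add: power2_norm_eq_inner)
    finally show ?thesis .
  qed
  then show ?thesis using sp by blast
qed



lemma bracket_bound:
  fixes L :: "real^'m^'m" and \<xi> :: "real^'m" and f :: "'m \<Rightarrow> real^'p"
  assumes q: "\<forall>y::real^'m. (\<Sum>i\<in>UNIV. \<Sum>j\<in>UNIV. \<xi>$i * L$i$j * y$i * y$j) - \<gamma> * \<xi>$i1 * (y$i1)^2 \<le> - \<sigma> * (y \<bullet> y)"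
  shows "(\<Sum>i\<in>UNIV. \<Sum>j\<in>UNIV. \<xi>$i * L$i$j * (f i \<bullet> f j)) - \<gamma> * \<xi>$i1 * (f i1 \<bullet> f i1)
         \<le> - \<sigma> * (\<Sum>i\<in>UNIV. f i \<bullet> f i)"
proof -
  define y where "y k = (\<chi> i. f i $ k)" for k
  have "(\<Sum>i\<in>UNIV. \<Sum>j\<in>UNIV. \<xi>$i * L$i$j * (f i \<bullet> f j)) - \<gamma> * \<xi>$i1 * (f i1 \<bullet> f i1)
      = (\<Sum>k\<in>UNIV. (\<Sum>i\<in>UNIV. \<Sum>j\<in>UNIV. \<xi>$i * L$i$j * y k$i * y k$j) - \<gamma> * \<xi>$i1 * (y k$i1)^2)"
  proof -
    have "(\<Sum>i\<in>UNIV. \<Sum>j\<in>UNIV. \<xi>$i * L$i$j * (f i \<bullet> f j))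
        = (\<Sum>i\<in>UNIV. \<Sum>j\<in>UNIV. \<Sum>k\<in>UNIV. \<xi>$i * L$i$j * y k$i * y k$j)"
      unfolding y_def inner_vec_def by (simp add: sum_distrib_left mult_ac)
    also have "\<dots> = (\<Sum>i\<in>UNIV. \<Sum>k\<in>UNIV. \<Sum>j\<in>UNIV. \<xi>$i * L$i$j * y k$i * y k$j)"
      by (rule sum.cong[OF refl], rule sum.swap)
    also have "\<dots> = (\<Sum>k\<in>UNIV. \<Sum>i\<in>UNIV. \<Sum>j\<in>UNIV. \<xi>$i * L$i$j * y k$i * y k$j)"
      by (rule sum.swap)
    finally have 1: "(\<Sum>i\<in>UNIV. \<Sum>j\<in>UNIV. \<xi>$i * L$i$j * (f i \<bullet> f j))
        = (\<Sum>k\<in>UNIV. \<Sum>i\<in>UNIV. \<Sum>j\<in>UNIV. \<xi>$i * L$i$j * y k$i * y k$j)" .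
    have 2: "\<gamma> * \<xi>$i1 * (f i1 \<bullet> f i1) = (\<Sum>k\<in>UNIV. \<gamma> * \<xi>$i1 * (y k$i1)^2)"
      unfolding y_def inner_vec_def by (simp add: sum_distrib_left power2_eq_square)
    show ?thesis unfolding 1 2 by (simp add: sum_subtractf)
  qed
  also have "\<dots> \<le> (\<Sum>k\<in>UNIV. - \<sigma> * (y k \<bullet> y k))"
  proof (rule sum_mono)
    fix k
    show "(\<Sum>i\<in>UNIV. \<Sum>j\<in>UNIV. \<xi>$i * L$i$j * y k$i * y k$j) - \<gamma> * \<xi>$i1 * (y k$i1)^2 \<le> - \<sigma> * (y k \<bullet> y k)"
      using q by blast
  qed
  also have "\<dots> = - \<sigma> * (\<Sum>i\<in>UNIV. f i \<bullet> f i)"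
  proof -
    have "(\<Sum>k\<in>UNIV. y k \<bullet> y k) = (\<Sum>i\<in>UNIV. f i \<bullet> f i)"
      unfolding y_def inner_vec_def by simp (rule sum.swap)
    then show ?thesis by (simp add: sum_negf flip: sum_distrib_left)
  qed
  finally show ?thesis .
qed



lemma mv_sum: "(M::real^'a^'b) *v (\<Sum>j\<in>S. g j) = (\<Sum>j\<in>S. M *v g j)"
  by (induction S rule: infinite_finite_induct) (auto simp: matrix_vector_right_distrib)

lemma quad_has_vd:
  fixes P :: "real^'n^'n"
  assumes g: "(g has_vector_derivative g') (at t within S)" and Ps: "transpose P = P"
  shows "((\<lambda>t. g t \<bullet> (P *v g t)) has_vector_derivative (2 * (g t \<bullet> (P *v g')))) (at t within S)"
proof -
  have h1: "((\<lambda>t. P *v g t) has_vector_derivative P *v g') (at t within S)"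
    by (rule bounded_linear.has_vector_derivative[OF matrix_vector_mul_bounded_linear g])
  have "((\<lambda>t. g t \<bullet> (P *v g t)) has_vector_derivative (g t \<bullet> (P *v g') + g' \<bullet> (P *v g t))) (at t within S)"
    by (rule bounded_bilinear.has_vector_derivative[OF bounded_bilinear_inner g h1])
  moreover have "g' \<bullet> (P *v g t) = g t \<bullet> (P *v g')"
    by (metis Ps dot_lmul_matrix inner_commute transpose_matrix_vector)
  ultimately show ?thesis by simp
qed

lemma decay:
  fixes V D :: "real \<Rightarrow> real"
  assumes der: "\<forall>t\<ge>0. (V has_vector_derivative D t) (at t within {0..})"
    and bd: "\<forall>t\<ge>0. D t \<le> - \<delta> * V t"
    and T: "T \<ge> 0"
  shows "V T \<le> V 0 * exp (- \<delta> * T)"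
proof -
  define W where "W t = exp (\<delta> * t) * V t" for t
  define W' where "W' t = exp (\<delta> * t) * \<delta> * V t + exp (\<delta> * t) * D t" for t
  have dW: "(W has_field_derivative W' t) (at t within {0..})" if "t \<ge> 0" for t
  proof -
    have dV: "(V has_field_derivative D t) (at t within {0..})"
      using der that by (simp add: has_real_derivative_iff_has_vector_derivative)
    show ?thesis unfolding W_def W'_def
      by (rule derivative_eq_intros dV refl | simp)+
  qed
  have W'nonpos: "W' t \<le> 0" if "t \<ge> 0" for t
  proof -
    have "W' t = exp (\<delta> * t) * (\<delta> * V t + D t)" unfolding W'_def by (simp add: algebra_simps)
    moreover have "\<delta> * V t + D t \<le> 0" using bd that by force
    ultimately show ?thesis by (simp add: mult_nonneg_nonpos)
  qed
  obtain x where x: "x \<in> {0..T}" and mv: "W T - W 0 = (\<lambda>h. W' x * h) (T - 0)"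
  proof -
    have "\<exists>x\<in>{0..T}. W T - W 0 = (\<lambda>h. W' x * h) (T - 0)"
    proof (rule mvt_very_simple[OF T])
      fix x assume "0 \<le> x" "x \<le> T"
      then have "(W has_field_derivative W' x) (at x within {0..T})"
        by (intro has_field_derivative_subset[OF dW]) auto
      then show "(W has_derivative (\<lambda>h. W' x * h)) (at x within {0..T})"
        by (simp add: has_field_derivative_def mult_commute_abs)
    qed
    then show ?thesis using that by blast
  qed
  have "W T \<le> W 0" using mv W'nonpos[of x] x T mult_nonpos_nonneg[of "W' x" T] by simp
  then have "exp (\<delta> * T) * V T \<le> V 0" unfolding W_def by simp
  then have "exp (- \<delta> * T) * (exp (\<delta> * T) * V T) \<le> exp (- \<delta> * T) * V 0"
    by (intro mult_left_mono) auto
  moreover have "exp (- \<delta> * T) * (exp (\<delta> * T) * V T) = V T"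
  proof -
    have "exp (- \<delta> * T) * (exp (\<delta> * T) * V T) = (exp (\<delta> * T) * exp (- (\<delta> * T))) * V T" by (simp add: mult_ac)
    then show ?thesis by (simp add: exp_minus_inverse)
  qed
  ultimately show ?thesis by (metis mult.commute)
qed

lemma exp_decay_lim: fixes \<delta> C :: real shows "\<delta> > 0 \<Longrightarrow> ((\<lambda>t. C * exp (- \<delta> * t)) \<longlongrightarrow> 0) at_top"
proof -
  assume d: "\<delta> > 0"
  have "filterlim (\<lambda>t. \<delta> * t) at_top at_top"
    using filterlim_tendsto_pos_mult_at_top[of "\<lambda>_. \<delta>" \<delta> at_top "\<lambda>t. t"] d by (simp add: filterlim_ident)
  then have "filterlim (\<lambda>t. - \<delta> * t) at_bot at_top"
    using filterlim_uminus_at_top by (simp add: filterlim_uminus_at_top)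
  then have "((\<lambda>t. exp (- \<delta> * t)) \<longlongrightarrow> 0) at_top"
    using exp_at_bot filterlim_compose by blast
  then show ?thesis using tendsto_mult_right_zero by blast
qed



lemma P_inv:
  fixes P :: "real^'n^'n"
  assumes "pos_def_matrix P"
  shows "P ** matrix_inv P = mat 1"
proof -
  have "\<forall>x. P *v x = 0 \<longrightarrow> x = 0"
    using assms unfolding pos_def_matrix_def by (metis inner_zero_right less_irrefl)
  then obtain C where "C ** P = mat 1" using matrix_left_invertible_ker by blast
  then have "P ** C = mat 1" using matrix_left_right_inverse by blast
  then have "\<exists>A'. P ** A' = mat 1 \<and> A' ** P = mat 1" using \<open>C ** P = mat 1\<close> by blast
  then show ?thesis unfolding matrix_inv_def by (rule someI_ex[where P="\<lambda>A'. P ** A' = mat 1 \<and> A' ** P = mat 1", THEN conjunct1])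
qed

lemma key_BB:
  fixes P :: "real^'n^'n" and B :: "real^'p^'n"
  assumes "P ** matrix_inv P = mat 1"
  shows "u \<bullet> (P *v ((matrix_inv P ** B ** transpose B) *v z)) = (transpose B *v u) \<bullet> (transpose B *v z)"
proof -
  have "P *v ((matrix_inv P ** B ** transpose B) *v z) = B *v (transpose B *v z)"
    by (metis assms matrix_mul_assoc matrix_mul_lid matrix_vector_mul_assoc)
  then show ?thesis by (simp add: dot_lmul_matrix[symmetric])
qed

lemma mv_bound:
  fixes M :: "real^'a^'b"
  shows "\<exists>K>0. \<forall>z. norm (M *v z) \<le> K * norm z"
proof -
  obtain K where "K > 0" "\<forall>z. norm (M *v z) \<le> norm z * K"
    using bounded_linear.pos_bounded[OF matrix_vector_mul_bounded_linear[of M]] by blast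
  then show ?thesis by (metis mult.commute)
qed

lemma P_lower:
  fixes P :: "real^'n^'n"
  assumes "pos_def_matrix P"
  shows "\<exists>p>0. \<forall>z. p * (z \<bullet> z) \<le> z \<bullet> (P *v z)"
proof -
  have "\<exists>\<sigma>>0. \<forall>y. - (y \<bullet> (P *v y)) \<le> - \<sigma> * (y \<bullet> y)"
  proof (rule quad_neg_unif)
    show "continuous_on UNIV (\<lambda>y. - (y \<bullet> (P *v y)))"
      by (intro continuous_intros linear_continuous_on matrix_vector_mul_bounded_linear)
    show "- (t *\<^sub>R y \<bullet> (P *v (t *\<^sub>R y))) = t^2 * - (y \<bullet> (P *v y))" for y t
      by (simp add: matrix_vector_mult_scaleR power2_eq_square)
    show "- (y \<bullet> (P *v y)) < 0" if "y \<noteq> 0" for y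
      using assms that unfolding pos_def_matrix_def by simp
  qed
  then show ?thesis by force
qed

lemma P_upper:
  fixes P :: "real^'n^'n"
  shows "\<exists>K>0. \<forall>z. z \<bullet> (P *v z) \<le> K * (z \<bullet> z)"
proof -
  obtain K where K: "K > 0" "\<forall>z. norm (P *v z) \<le> K * norm z" using mv_bound by blast
  have "z \<bullet> (P *v z) \<le> K * (z \<bullet> z)" for z
  proof -
    have "z \<bullet> (P *v z) \<le> norm z * norm (P *v z)" by (rule norm_cauchy_schwarz)
    also have "\<dots> \<le> norm z * (K * norm z)" using K by (simp add: mult_left_mono)
    also have "\<dots> = K * (z \<bullet> z)" by (simp add: power2_norm_eq_inner[symmetric] power2_eq_square)
    finally show ?thesis .
  qed
  then show ?thesis using K by blast
qed

lemma B_upper: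
  fixes M :: "real^'a^'b"
  shows "\<exists>\<beta>>0. \<forall>z. (M *v z) \<bullet> (M *v z) \<le> \<beta> * (z \<bullet> z)"
proof -
  obtain K where K: "K > 0" "\<forall>z. norm (M *v z) \<le> K * norm z" using mv_bound by blast
  have "(M *v z) \<bullet> (M *v z) \<le> K^2 * (z \<bullet> z)" for z
  proof -
    have "norm (M *v z)^2 \<le> (K * norm z)^2" using K by (intro power_mono) auto
    then show ?thesis by (simp add: power2_norm_eq_inner power_mult_distrib)
  qed
  then show ?thesis using K by (intro exI[of _ "K^2"]) auto
qed



lemma step_bound:
  fixes A P :: "real^'n^'n" and B :: "real^'p^'n" and L :: "real^'m^'m" and \<xi> :: "real^'m"
    and E :: "'m \<Rightarrow> real^'n"
  assumes PI: "P ** matrix_inv P = mat 1"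
    and Pineq0: "\<forall>z. z \<bullet> (P *v (A *v z - (matrix_inv P ** B ** transpose B) *v z)) \<le> - eps * (z \<bullet> z)"
    and plow: "\<forall>z. p * (z \<bullet> z) \<le> z \<bullet> (P *v z)" and ppos: "p > 0"
    and bup: "\<forall>z. (transpose B *v z) \<bullet> (transpose B *v z) \<le> \<beta> * (z \<bullet> z)" and bpos: "\<beta> > 0"
    and xpos: "\<forall>i. \<xi>$i > 0"
    and q: "\<forall>y::real^'m. (\<Sum>i\<in>UNIV. \<Sum>j\<in>UNIV. \<xi>$i * L$i$j * y$i * y$j) - (varepsilon * p / \<beta>) * \<xi>$i1 * (y$i1)^2 \<le> - \<sigma> * (y \<bullet> y)"
    and cbig: "\<forall>i. \<xi>$i \<le> c * \<sigma>" and cpos: "c \<ge> 0" and vpos: "varepsilon > 0"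
  shows "(\<Sum>i\<in>UNIV. \<xi>$i * (E i \<bullet> (P *v (A *v E i
            + c *\<^sub>R (\<Sum>j\<in>UNIV. L $ i $ j *\<^sub>R ((matrix_inv P ** B ** transpose B) *v E j))
            - (if i = i1 then (c * varepsilon) *\<^sub>R E i else 0)))))
         \<le> - eps * (\<Sum>i\<in>UNIV. \<xi>$i * (E i \<bullet> E i))"
proof -
  define K where "K = matrix_inv P ** B ** transpose B"
  define f where "f i = transpose B *v E i" for i
  define \<gamma> where "\<gamma> = varepsilon * p / \<beta>"
  have key: "u \<bullet> (P *v (K *v z)) = (transpose B *v u) \<bullet> (transpose B *v z)" for u z
    unfolding K_def by (rule key_BB[OF PI])
  have a: "E i \<bullet> (P *v (A *v E i + c *\<^sub>R (\<Sum>j\<in>UNIV. L $ i $ j *\<^sub>R (K *v E j))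
            - (if i = i1 then (c * varepsilon) *\<^sub>R E i else 0)))
        = E i \<bullet> (P *v (A *v E i)) + c * (\<Sum>j\<in>UNIV. L$i$j * (f i \<bullet> f j))
          - (if i = i1 then c * varepsilon * (E i \<bullet> (P *v E i)) else 0)" for i
  proof -
    have "E i \<bullet> (P *v (\<Sum>j\<in>UNIV. L $ i $ j *\<^sub>R (K *v E j))) = (\<Sum>j\<in>UNIV. L$i$j * (f i \<bullet> f j))"
      unfolding mv_sum f_def by (simp add: inner_sum_right matrix_vector_mult_scaleR key)
    then show ?thesis
      by (cases "i = i1") (simp_all add: matrix_vector_right_distrib matrix_vector_mult_diff_distrib matrix_vector_mult_scaleR inner_diff_right inner_add_right)
  qed
  have b: "E i \<bullet> (P *v (A *v E i)) \<le> f i \<bullet> f i - eps * (E i \<bullet> E i)" for i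
  proof -
    have "E i \<bullet> (P *v (A *v E i - K *v E i)) = E i \<bullet> (P *v (A *v E i)) - f i \<bullet> f i"
      unfolding f_def by (simp add: matrix_vector_mult_diff_distrib inner_diff_right key)
    moreover have "E i \<bullet> (P *v (A *v E i - K *v E i)) \<le> - eps * (E i \<bullet> E i)"
      using Pineq0 unfolding K_def by blast
    ultimately show ?thesis by linarith
  qed
  have c: "c * \<gamma> * (f i \<bullet> f i) \<le> c * varepsilon * (E i \<bullet> (P *v E i))" for i
  proof -
    have "f i \<bullet> f i \<le> \<beta> * (E i \<bullet> E i)" unfolding f_def using bup by blast
    then have "p * (f i \<bullet> f i) / \<beta> \<le> p * (E i \<bullet> E i)" using bpos ppos
      by (simp add: divide_le_eq mult.commute mult.left_commute mult_left_mono)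
    also have "\<dots> \<le> E i \<bullet> (P *v E i)" using plow by blast
    finally have h: "p * (f i \<bullet> f i) / \<beta> \<le> E i \<bullet> (P *v E i)" .
    have "\<gamma> * (f i \<bullet> f i) = varepsilon * (p * (f i \<bullet> f i) / \<beta>)" unfolding \<gamma>_def by simp
    also have "\<dots> \<le> varepsilon * (E i \<bullet> (P *v E i))" using h vpos by (intro mult_left_mono) auto
    finally have "\<gamma> * (f i \<bullet> f i) \<le> varepsilon * (E i \<bullet> (P *v E i))" .
    then show ?thesis using cpos by (simp add: mult.assoc mult_left_mono)
  qed
  have t: "E i \<bullet> (P *v (A *v E i + c *\<^sub>R (\<Sum>j\<in>UNIV. L $ i $ j *\<^sub>R (K *v E j))
            - (if i = i1 then (c * varepsilon) *\<^sub>R E i else 0)))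
        \<le> f i \<bullet> f i - eps * (E i \<bullet> E i) + c * (\<Sum>j\<in>UNIV. L$i$j * (f i \<bullet> f j))
          - (if i = i1 then c * \<gamma> * (f i \<bullet> f i) else 0)" for i
    unfolding a using b[of i] c[of i] by auto
  have "(\<Sum>i\<in>UNIV. \<xi>$i * (E i \<bullet> (P *v (A *v E i + c *\<^sub>R (\<Sum>j\<in>UNIV. L $ i $ j *\<^sub>R (K *v E j))
            - (if i = i1 then (c * varepsilon) *\<^sub>R E i else 0)))))
      \<le> (\<Sum>i\<in>UNIV. \<xi>$i * (f i \<bullet> f i - eps * (E i \<bullet> E i) + c * (\<Sum>j\<in>UNIV. L$i$j * (f i \<bullet> f j))
          - (if i = i1 then c * \<gamma> * (f i \<bullet> f i) else 0)))"
    by (intro sum_mono mult_left_mono t) (use xpos in \<open>auto intro: less_imp_le\<close>)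
  also have "\<dots> = (\<Sum>i\<in>UNIV. \<xi>$i * (f i \<bullet> f i)) - eps * (\<Sum>i\<in>UNIV. \<xi>$i * (E i \<bullet> E i))
        + c * ((\<Sum>i\<in>UNIV. \<Sum>j\<in>UNIV. \<xi>$i * L$i$j * (f i \<bullet> f j)) - \<gamma> * \<xi>$i1 * (f i1 \<bullet> f i1))"
  proof -
    have s1: "(\<Sum>i\<in>UNIV. \<xi>$i * (if i = i1 then c * \<gamma> * (f i \<bullet> f i) else 0)) = c * (\<gamma> * \<xi>$i1 * (f i1 \<bullet> f i1))"
      by (simp add: if_distrib cong: if_cong)
    have s2: "(\<Sum>i\<in>UNIV. \<xi>$i * (c * (\<Sum>j\<in>UNIV. L$i$j * (f i \<bullet> f j)))) = c * (\<Sum>i\<in>UNIV. \<Sum>j\<in>UNIV. \<xi>$i * L$i$j * (f i \<bullet> f j))"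
      by (simp add: sum_distrib_left mult_ac)
    have "(\<Sum>i\<in>UNIV. \<xi>$i * (f i \<bullet> f i - eps * (E i \<bullet> E i) + c * (\<Sum>j\<in>UNIV. L$i$j * (f i \<bullet> f j))
          - (if i = i1 then c * \<gamma> * (f i \<bullet> f i) else 0)))
        = (\<Sum>i\<in>UNIV. \<xi>$i * (f i \<bullet> f i)) - eps * (\<Sum>i\<in>UNIV. \<xi>$i * (E i \<bullet> E i))
          + (\<Sum>i\<in>UNIV. \<xi>$i * (c * (\<Sum>j\<in>UNIV. L$i$j * (f i \<bullet> f j))))
          - (\<Sum>i\<in>UNIV. \<xi>$i * (if i = i1 then c * \<gamma> * (f i \<bullet> f i) else 0))"
      by (simp add: sum.distrib sum_subtractf sum_distrib_left right_diff_distrib distrib_left mult_ac)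
    then show ?thesis unfolding s1 s2 by (simp add: right_diff_distrib)
  qed
  also have "\<dots> \<le> (\<Sum>i\<in>UNIV. \<xi>$i * (f i \<bullet> f i)) - eps * (\<Sum>i\<in>UNIV. \<xi>$i * (E i \<bullet> E i))
        + c * (- \<sigma> * (\<Sum>i\<in>UNIV. f i \<bullet> f i))"
    using bracket_bound[of \<xi> L \<gamma> i1 \<sigma> f] q cpos unfolding \<gamma>_def
    by (intro add_left_mono mult_left_mono) auto
  also have "\<dots> \<le> - eps * (\<Sum>i\<in>UNIV. \<xi>$i * (E i \<bullet> E i))"
  proof -
    have "(\<Sum>i\<in>UNIV. \<xi>$i * (f i \<bullet> f i)) \<le> (\<Sum>i\<in>UNIV. (c * \<sigma>) * (f i \<bullet> f i))"
      using cbig by (intro sum_mono mult_right_mono) auto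
    also have "\<dots> = c * \<sigma> * (\<Sum>i\<in>UNIV. f i \<bullet> f i)" by (simp add: sum_distrib_left)
    finally have h: "(\<Sum>i\<in>UNIV. \<xi>$i * (f i \<bullet> f i)) \<le> c * \<sigma> * (\<Sum>i\<in>UNIV. f i \<bullet> f i)" .
    have "c * (- \<sigma> * (\<Sum>i\<in>UNIV. f i \<bullet> f i)) = - (c * \<sigma> * (\<Sum>i\<in>UNIV. f i \<bullet> f i))" by simp
    then show ?thesis using h by linarith
  qed
  finally show ?thesis unfolding K_def .
qed



theorem proposition10:
  fixes A :: "real^'n^'n" and B :: "real^'p^'n" and P :: "real^'n^'n"
    and L :: "real^'m^'m" and eps varepsilon :: real and i1 :: 'm
  assumes ctrl: "controllable A B"
    and Ppd: "pos_def_matrix P"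
    and eps_pos: "eps > 0"
    and Pineq: "\<forall>x y. (x - y) \<bullet> (P *v (A *v (x - y) - (matrix_inv P ** B ** transpose B) *v (x - y)))
                    \<le> - eps * ((x - y) \<bullet> (x - y))"
    and Lirr: "irreducible_matrix L"
    and Lrank: "rank L = CARD('m) - 1"
    and Loff: "\<forall>i j. i \<noteq> j \<longrightarrow> L $ i $ j \<ge> 0"
    and Lrow: "\<forall>i. (\<Sum>j\<in>UNIV. L $ i $ j) = 0"
    and vareps_pos: "varepsilon > 0"
  shows "\<exists>c0. \<forall>c > c0. \<forall>(s :: real \<Rightarrow> real^'n) (x :: real \<Rightarrow> 'm \<Rightarrow> real^'n).
           (\<forall>t\<ge>0. (s has_vector_derivative (A *v s t)) (at t within {0..})) \<longrightarrow>
           (\<forall>t\<ge>0. \<forall>i. ((\<lambda>\<tau>. x \<tau> i) has_vector_derivative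
                 (A *v x t i
                  + c *\<^sub>R (\<Sum>j\<in>UNIV. L $ i $ j *\<^sub>R ((matrix_inv P ** B ** transpose B) *v x t j))
                  - (if i = i1 then (c * varepsilon) *\<^sub>R (x t i - s t) else 0)))
                 (at t within {0..})) \<longrightarrow>
           (\<forall>i. ((\<lambda>t. x t i - s t) \<longlongrightarrow> 0) at_top)"
proof -
  define K where "K = matrix_inv P ** B ** transpose B"
  obtain \<xi> :: "real^'m" where xpos: "\<forall>i. \<xi>$i > 0" and xk: "\<forall>j. (\<Sum>i\<in>UNIV. \<xi>$i * L$i$j) = 0"
    using xi_exists[OF Loff Lrow Lirr] by blast
  obtain p where ppos: "p > 0" and plow: "\<forall>z. p * (z \<bullet> z) \<le> z \<bullet> (P *v z)"
    using P_lower[OF Ppd] by blast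
  obtain \<beta> where bpos: "\<beta> > 0" and bup: "\<forall>z. (transpose B *v z) \<bullet> (transpose B *v z) \<le> \<beta> * (z \<bullet> z)"
    using B_upper by blast
  obtain Pm where Pmpos: "Pm > 0" and Pup: "\<forall>z. z \<bullet> (P *v z) \<le> Pm * (z \<bullet> z)"
    using P_upper by blast
  define \<gamma> where "\<gamma> = varepsilon * p / \<beta>"
  have gpos: "\<gamma> > 0" unfolding \<gamma>_def using vareps_pos ppos bpos by simp
  have "\<exists>\<sigma>>0. \<forall>y::real^'m. (\<Sum>i\<in>UNIV. \<Sum>j\<in>UNIV. \<xi>$i * L$i$j * y$i * y$j) - \<gamma> * \<xi>$i1 * (y$i1)^2 \<le> - \<sigma> * (y \<bullet> y)"
  proof (rule quad_neg_unif)
    show "continuous_on UNIV (\<lambda>y::real^'m. (\<Sum>i\<in>UNIV. \<Sum>j\<in>UNIV. \<xi>$i * L$i$j * y$i * y$j) - \<gamma> * \<xi>$i1 * (y$i1)^2)"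
      by (intro continuous_intros)
    show "(\<Sum>i\<in>UNIV. \<Sum>j\<in>UNIV. \<xi>$i * L$i$j * (t *\<^sub>R y)$i * (t *\<^sub>R y)$j) - \<gamma> * \<xi>$i1 * ((t *\<^sub>R y)$i1)^2
        = t^2 * ((\<Sum>i\<in>UNIV. \<Sum>j\<in>UNIV. \<xi>$i * L$i$j * y$i * y$j) - \<gamma> * \<xi>$i1 * (y$i1)^2)" for t y
      by (simp add: sum_distrib_left right_diff_distrib power2_eq_square mult_ac)
    show "(\<Sum>i\<in>UNIV. \<Sum>j\<in>UNIV. \<xi>$i * L$i$j * y$i * y$j) - \<gamma> * \<xi>$i1 * (y$i1)^2 < 0" if "y \<noteq> 0" for y
      by (rule quad_neg[OF Loff Lrow Lirr xpos xk gpos that])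
  qed
  then obtain \<sigma> where spos: "\<sigma> > 0"
    and q: "\<forall>y::real^'m. (\<Sum>i\<in>UNIV. \<Sum>j\<in>UNIV. \<xi>$i * L$i$j * y$i * y$j) - (varepsilon * p / \<beta>) * \<xi>$i1 * (y$i1)^2 \<le> - \<sigma> * (y \<bullet> y)"
    unfolding \<gamma>_def by blast
  have PI: "P ** matrix_inv P = mat 1" by (rule P_inv[OF Ppd])
  have Ps: "transpose P = P" using Ppd unfolding pos_def_matrix_def by blast
  have Pineq0: "\<forall>z. z \<bullet> (P *v (A *v z - (matrix_inv P ** B ** transpose B) *v z)) \<le> - eps * (z \<bullet> z)"
    using Pineq by (metis diff_zero)
  define c0 where "c0 = (\<Sum>i\<in>UNIV. \<xi>$i) / \<sigma>"
  have c0pos: "c0 > 0" unfolding c0_def using spos xpos by (simp add: sum_pos)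
  show ?thesis
  proof (rule exI[of _ c0], rule allI, rule impI, rule allI, rule allI, rule impI, rule impI)
    fix c :: real and s :: "real \<Rightarrow> real^'n" and x :: "real \<Rightarrow> 'm \<Rightarrow> real^'n"
    assume cgt: "c > c0"
      and hs: "\<forall>t\<ge>0. (s has_vector_derivative (A *v s t)) (at t within {0..})"
      and hx: "\<forall>t\<ge>0. \<forall>i. ((\<lambda>\<tau>. x \<tau> i) has_vector_derivative
                 (A *v x t i
                  + c *\<^sub>R (\<Sum>j\<in>UNIV. L $ i $ j *\<^sub>R ((matrix_inv P ** B ** transpose B) *v x t j))
                  - (if i = i1 then (c * varepsilon) *\<^sub>R (x t i - s t) else 0)))
                 (at t within {0..})"
    have cpos: "c \<ge> 0" using cgt c0pos by simp
    have cbig: "\<forall>i. \<xi>$i \<le> c * \<sigma>"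
    proof
      fix i
      have "\<xi>$i \<le> (\<Sum>i\<in>UNIV. \<xi>$i)" using xpos by (intro member_le_sum) (auto intro: less_imp_le)
      also have "\<dots> = c0 * \<sigma>" unfolding c0_def using spos by simp
      also have "\<dots> \<le> c * \<sigma>" using cgt spos by simp
      finally show "\<xi>$i \<le> c * \<sigma>" .
    qed
    define e where "e t i = x t i - s t" for t i
    define ed where "ed t i = A *v e t i + c *\<^sub>R (\<Sum>j\<in>UNIV. L $ i $ j *\<^sub>R (K *v e t j))
                  - (if i = i1 then (c * varepsilon) *\<^sub>R e t i else 0)" for t i
    have de: "((\<lambda>\<tau>. e \<tau> i) has_vector_derivative ed t i) (at t within {0..})" if "t \<ge> 0" for t i
    proof -
      have h: "((\<lambda>\<tau>. x \<tau> i - s \<tau>) has_vector_derivative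
                 ((A *v x t i
                  + c *\<^sub>R (\<Sum>j\<in>UNIV. L $ i $ j *\<^sub>R (K *v x t j))
                  - (if i = i1 then (c * varepsilon) *\<^sub>R (x t i - s t) else 0)) - A *v s t))
                 (at t within {0..})"
        using hx hs that unfolding K_def by (intro has_vector_derivative_diff) auto
      have sumeq: "(\<Sum>j\<in>UNIV. L $ i $ j *\<^sub>R (K *v e t j)) = (\<Sum>j\<in>UNIV. L $ i $ j *\<^sub>R (K *v x t j))"
      proof -
        have "(\<Sum>j\<in>UNIV. L $ i $ j *\<^sub>R (K *v e t j)) = (\<Sum>j\<in>UNIV. L $ i $ j *\<^sub>R (K *v x t j)) - (\<Sum>j\<in>UNIV. L $ i $ j *\<^sub>R (K *v s t))"
          unfolding e_def by (simp add: matrix_vector_mult_diff_distrib scaleR_diff_right sum_subtractf)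
        also have "(\<Sum>j\<in>UNIV. L $ i $ j *\<^sub>R (K *v s t)) = (\<Sum>j\<in>UNIV. L $ i $ j) *\<^sub>R (K *v s t)"
          by (simp add: scaleR_sum_left)
        also have "\<dots> = 0" using Lrow by simp
        finally show ?thesis by simp
      qed
      have "(A *v x t i
                  + c *\<^sub>R (\<Sum>j\<in>UNIV. L $ i $ j *\<^sub>R (K *v x t j))
                  - (if i = i1 then (c * varepsilon) *\<^sub>R (x t i - s t) else 0)) - A *v s t = ed t i"
        unfolding ed_def sumeq unfolding e_def by (simp add: matrix_vector_mult_diff_distrib algebra_simps)
      then show ?thesis using h unfolding e_def by simp
    qed
    define V where "V t = (\<Sum>i\<in>UNIV. \<xi>$i * (e t i \<bullet> (P *v e t i)))" for t
    define D where "D t = (\<Sum>i\<in>UNIV. \<xi>$i * (2 * (e t i \<bullet> (P *v ed t i))))" for t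
    have dV: "\<forall>t\<ge>0. (V has_vector_derivative D t) (at t within {0..})"
    proof (intro allI impI)
      fix t :: real assume t: "t \<ge> 0"
      show "(V has_vector_derivative D t) (at t within {0..})"
        unfolding V_def[abs_def] D_def
        by (intro has_vector_derivative_sum has_vector_derivative_mult_right quad_has_vd[OF de[OF t] Ps])
    qed
    define \<delta> where "\<delta> = 2 * eps / Pm"
    have dpos: "\<delta> > 0" unfolding \<delta>_def using eps_pos Pmpos by simp
    have bd: "\<forall>t\<ge>0. D t \<le> - \<delta> * V t"
    proof (intro allI impI)
      fix t :: real assume t: "t \<ge> 0"
      define S where "S = (\<Sum>i\<in>UNIV. \<xi>$i * (e t i \<bullet> e t i))"
      have st: "(\<Sum>i\<in>UNIV. \<xi>$i * (e t i \<bullet> (P *v ed t i))) \<le> - eps * S"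
        unfolding S_def ed_def K_def
        by (rule step_bound[OF PI Pineq0 plow ppos bup bpos xpos q cbig cpos vareps_pos])
      have D2: "D t = 2 * (\<Sum>i\<in>UNIV. \<xi>$i * (e t i \<bullet> (P *v ed t i)))"
        unfolding D_def by (simp add: sum_distrib_left mult_ac)
      have VS: "V t \<le> Pm * S"
        unfolding V_def S_def sum_distrib_left
        using Pup xpos by (intro sum_mono) (simp add: mult.left_commute mult_left_mono less_imp_le)
      have "\<delta> * V t \<le> \<delta> * (Pm * S)" using VS dpos by (simp add: mult_left_mono)
      also have "\<delta> * (Pm * S) = 2 * eps * S" unfolding \<delta>_def using Pmpos by simp
      finally show "D t \<le> - \<delta> * V t" using D2 st by linarith
    qed
    show "\<forall>i. ((\<lambda>t. x t i - s t) \<longlongrightarrow> 0) at_top"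
    proof
      fix i
      define C where "C = V 0 / (\<xi>$i * p)"
      have lowV: "\<xi>$i * p * (e t i \<bullet> e t i) \<le> V t" for t
      proof -
        have nn: "\<forall>j\<in>UNIV. 0 \<le> \<xi>$j * (e t j \<bullet> (P *v e t j))"
        proof
          fix j
          have "0 \<le> p * (e t j \<bullet> e t j)" using ppos by simp
          also have "\<dots> \<le> e t j \<bullet> (P *v e t j)" using plow by blast
          finally show "0 \<le> \<xi>$j * (e t j \<bullet> (P *v e t j))" using xpos by (simp add: less_imp_le)
        qed
        have "\<xi>$i * p * (e t i \<bullet> e t i) \<le> \<xi>$i * (e t i \<bullet> (P *v e t i))"
          using plow xpos by (simp add: mult.assoc mult_left_mono less_imp_le)
        also have "\<dots> \<le> V t" unfolding V_def using nn by (intro member_le_sum) auto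
        finally show ?thesis .
      qed
      have bnd: "norm (e t i) \<le> sqrt (C * exp (- \<delta> * t))" if t: "t \<ge> 0" for t
      proof (rule real_le_rsqrt)
        have "\<xi>$i * p * (norm (e t i))^2 \<le> V 0 * exp (- \<delta> * t)"
          using lowV[of t] decay[OF dV bd t] by (simp add: power2_norm_eq_inner)
        moreover have "\<xi>$i * p > 0" using xpos ppos by simp
        ultimately show "(norm (e t i))^2 \<le> C * exp (- \<delta> * t)"
          unfolding C_def by (simp add: field_simps)
      qed
      have lim: "((\<lambda>t. sqrt (C * exp (- \<delta> * t))) \<longlongrightarrow> 0) at_top"
        using tendsto_real_sqrt[OF exp_decay_lim[OF dpos, of C]] by simp
      have "((\<lambda>t. norm (e t i)) \<longlongrightarrow> 0) at_top"
      proof -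
        have ev1: "eventually (\<lambda>t. (0::real) \<le> norm (e t i)) at_top" by simp
        have ev2: "eventually (\<lambda>t. norm (e t i) \<le> sqrt (C * exp (- \<delta> * t))) at_top"
          unfolding eventually_at_top_linorder using bnd by blast
        show ?thesis by (rule tendsto_sandwich[OF ev1 ev2 tendsto_const lim])
      qed
      then show "((\<lambda>t. x t i - s t) \<longlongrightarrow> 0) at_top"
        unfolding e_def tendsto_norm_zero_iff .
    qed
  qed
qed


end
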